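(* Let $\eta \geq \varepsilon > 0$ and let the algorithm below be initialised with $\mathcal S_1=\{(\hat A_1,\hat B_1)\}$, $(\hat A_1, \hat B_1) \in \Omega$. Then, in a finite number of steps, the algorithm either declares infeasibility or returns a triplet $(Q, Y, Z)$ such that $V(x) = x^\top Q^{-1} x$ is a control Lyapunov function for the uncertain system $x(t+1)=A(t)x(t)+B(t)u(t)$, $(A(t),B(t))\in\Omega$, with saturated input $u = \mathrm{sat}_{\mathscr U}(Kx)$, where $K = YQ^{-1}$.
   Context: Consider the discrete-time control-affine system $x(t+1)=f(x(t))+g(x(t),\phi(t))u(t)$ with $f:\mathbb{R}^n\to\mathbb{R}^n$, $g:\mathbb{R}^n\times[0,1]^p\to\mathbb{R}^{n\times p}$ of class $C^2$, state domain $\mathscr D=\{x\in\mathbb{R}^n : Lx\le \mathbf 1_\ell\}$ ($L\in\mathbb{R}^{\ell\times n}$, rows $l_i$), input set $\mathscr U=\{u\in\mathbb{R}^p: |u|\le \bar u\}$, and fault set $\Phi=\{\phi\in[0,1]^p : \text{at least } p-1 \text{ entries equal } 1\}$ ($\phi_i$ = efficiency of actuator $i$). $\mathrm{sat}_{\mathscr U}$ is the componentwise saturation $u_i\mapsto \mathrm{sign}(u_i)\min\{\bar u_i,|u_i|\}$. Let $\Omega$ be the set of pairs $(A,B)$ with $A=\frac{df}{dx}|_{x=\bar x}$, $B=\frac{dg}{dx}|_{x=\bar x,\phi=\bar\phi}$ for $\bar x\in\mathscr D$, $\bar\phi\in\Phi$; $\Omega$ is assumed bounded (hence compact and connected), and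 $A$, $B$ are Lipschitz in $x$ (and $\phi$) with constants $\kappa_A,\kappa_B$. Let $E_j$, $j=1,\dots,2^p$, be the diagonal $p\times p$ matrices with $0/1$ entries, $E_j^-=I-E_j$, and fix $\tau\in[0,1]$. For $(A,B)$, $j$ and matrices $(Q,Y,Z)$ define the symmetric block matrix $\Xi(A,B,j)=\begin{bmatrix}\tau Q & \star & \star\\ 0 & (1-\tau)I & \star\\ AQ+BE_jY+BE_j^-Z & 0 & Q\end{bmatrix}$ ($\star$ = transposed blocks). Algorithm: at step $k$, the learner takes the finite sample set $\mathcal S_k\subset\Omega$, computes the $V_k$ vertices $(A_i,B_i)$ of $\mathrm{conv}(\mathcal S_k)$, and solves the SDP: maximise $\mathrm{trace}(Q)$ over $Q,Y,Z$ subject to $\Xi(A_i,B_i,j)\succcurlyeq \varepsilon I$ for all $i=1,\dots,V_k$, $j=1,\dots,2^p$; $\begin{bmatrix}1 & l_iQ\\ Ql_i^\top & Q\end{bmatrix}\succcurlyeq 0$ for all $i=1,\dots,\ell$; $\begin{bmatrix}\bar u_i^2 & z_i\\ z_i^\top & Q\end{bmatrix}\succcurlyeq0$ for all $i=1,\dots,p$ ($z_i$ = $i$-th row of $Z$); $Q\preccurlyeq \eta I$, $Y\in\mathcal Y$, $Z\in\mathcal Z$ with $\mathcal Y,\mathcal Z$ nonempty convex compact. If infeasible, the algorithm exits declaring infeasibility; otherwise it sets $P_k=Q^{-1}$, $K_k=YQ^{-1}$, $H_k=ZQ^{-1}$. The verifier then solves globally (via Lipschitz global optimisation) $\lambda^*=\min_{(A,B)\in\Omega,\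 j}\lambda_{\min}(\Xi_k(A,B,j))$, equivalently minimising over $x\in\mathscr D,\phi\in\Phi$. If $\lambda^*\le0$ the minimiser $(A^*,B^* )$ is added: $\mathcal S_{k+1}=\mathcal S_k\cup\{(A^*,B^* )\}$ and the loop repeats; if $\lambda^*>0$ it returns $V(x)=x^\top P_kx$, $K=K_k$, $H=H_k$. *)

theory Defs
  imports "HOL-Analysis.Analysis"
begin

definition psd :: "real^'m^'m \<Rightarrow> bool" where
  "psd M \<longleftrightarrow> transpose M = M \<and> (\<forall>x. 0 \<le> x \<bullet> (M *v x))"

definition lam_min :: "real^'m^'m \<Rightarrow> real" where
  "lam_min M = Inf {x \<bullet> (M *v x) | x. norm x = 1}"

text \<open>The diagonal 0/1 matrices E_j, indexed by the set J of diagonal positions equal to 1.\<close>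
definition Emat :: "'p set \<Rightarrow> real^'p^'p" where
  "Emat J = (\<chi> i k. if i = k \<and> i \<in> J then 1 else 0)"

text \<open>The block matrix Xi(A,B,j) = [tau Q, *, *; 0, (1-tau) I, *; AQ+BE_jY+BE_j^-Z, 0, Q].\<close>
definition Xi :: "real \<Rightarrow> real^'n^'n \<Rightarrow> real^'p^'n \<Rightarrow> 'p set \<Rightarrow> real^'n^'n \<Rightarrow>
    real^'n^'p \<Rightarrow> real^'n^'p \<Rightarrow> real^('n + 'n + 'n)^('n + 'n + 'n)" where
  "Xi \<tau> A B J Q Y Z =
    (let M = A ** Q + B ** Emat J ** Y + B ** (mat 1 - Emat J) ** Z in
     \<chi> r c. (case r of
        Inl a \<Rightarrow> (case c of Inl b \<Rightarrow> \<tau> * Q$a$b | Inr (Inl b) \<Rightarrow> 0 | Inr (Inr b) \<Rightarrow> M$b$a)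
      | Inr (Inl a) \<Rightarrow> (case c of Inl b \<Rightarrow> 0 | Inr (Inl b) \<Rightarrow> (1 - \<tau>) * (mat 1 :: real^'n^'n)$a$b
                                 | Inr (Inr b) \<Rightarrow> 0)
      | Inr (Inr a) \<Rightarrow> (case c of Inl b \<Rightarrow> M$a$b | Inr (Inl b) \<Rightarrow> 0 | Inr (Inr b) \<Rightarrow> Q$a$b)))"

definition blk2 :: "real \<Rightarrow> real^'n \<Rightarrow> real^'n \<Rightarrow> real^'n^'n \<Rightarrow> real^(unit + 'n)^(unit + 'n)" where
  "blk2 a r c Q =
    (\<chi> i k. (case i of
        Inl _ \<Rightarrow> (case k of Inl _ \<Rightarrow> a | Inr b \<Rightarrow> r$b)
      | Inr i' \<Rightarrow> (case k of Inl _ \<Rightarrow> c$i' | Inr b \<Rightarrow> Q$i'$b)))"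

definition verts :: "'a::real_vector set \<Rightarrow> 'a set" where
  "verts S = {v. v extreme_point_of (convex hull S)}"

definition sdp_feasible :: "real \<Rightarrow> real \<Rightarrow> real \<Rightarrow> real^'n^'l \<Rightarrow> real^'p \<Rightarrow>
    (real^'n^'p) set \<Rightarrow> (real^'n^'p) set \<Rightarrow> ((real^'n^'n) \<times> (real^'p^'n)) set \<Rightarrow>
    real^'n^'n \<Rightarrow> real^'n^'p \<Rightarrow> real^'n^'p \<Rightarrow> bool" where
  "sdp_feasible \<tau> \<epsilon> \<eta> L ubar YY ZZ V Q Y Z \<longleftrightarrow>
     (\<forall>(A, B) \<in> V. \<forall>J. psd (Xi \<tau> A B J Q Y Z - \<epsilon> *\<^sub>R mat 1)) \<and>
     (\<forall>i. psd (blk2 1 ((L$i) v* Q) (Q *v (L$i)) Q)) \<and>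
     (\<forall>i. psd (blk2 ((ubar$i)^2) (Z$i) (Z$i) Q)) \<and>
     psd (\<eta> *\<^sub>R mat 1 - Q) \<and> Y \<in> YY \<and> Z \<in> ZZ"

definition sdp_optimal :: "real \<Rightarrow> real \<Rightarrow> real \<Rightarrow> real^'n^'l \<Rightarrow> real^'p \<Rightarrow>
    (real^'n^'p) set \<Rightarrow> (real^'n^'p) set \<Rightarrow> ((real^'n^'n) \<times> (real^'p^'n)) set \<Rightarrow>
    real^'n^'n \<Rightarrow> real^'n^'p \<Rightarrow> real^'n^'p \<Rightarrow> bool" where
  "sdp_optimal \<tau> \<epsilon> \<eta> L ubar YY ZZ V Q Y Z \<longleftrightarrow>
     sdp_feasible \<tau> \<epsilon> \<eta> L ubar YY ZZ V Q Y Z \<and>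
     (\<forall>Q' Y' Z'. sdp_feasible \<tau> \<epsilon> \<eta> L ubar YY ZZ V Q' Y' Z' \<longrightarrow> trace Q' \<le> trace Q)"

definition is_global_min :: "((real^'n^'n) \<times> (real^'p^'n)) set \<Rightarrow> real \<Rightarrow> real^'n^'n \<Rightarrow>
    real^'n^'p \<Rightarrow> real^'n^'p \<Rightarrow> ((real^'n^'n) \<times> (real^'p^'n)) \<times> 'p set \<Rightarrow> bool" where
  "is_global_min \<Omega> \<tau> Q Y Z w \<longleftrightarrow>
     (case w of ((A, B), J) \<Rightarrow> (A, B) \<in> \<Omega> \<and>
        (\<forall>(A', B') \<in> \<Omega>. \<forall>J'. lam_min (Xi \<tau> A B J Q Y Z) \<le> lam_min (Xi \<tau> A' B' J' Q Y Z)))"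

definition lstar :: "real \<Rightarrow> ((real^'n^'n) \<times> (real^'n^'p) \<times> (real^'n^'p) \<Rightarrow> ((real^'n^'n) \<times> (real^'p^'n)) \<times> 'p set)
    \<Rightarrow> (real^'n^'n) \<times> (real^'n^'p) \<times> (real^'n^'p) \<Rightarrow> real" where
  "lstar \<tau> ver s = (case s of (Q, Y, Z) \<Rightarrow>
     (case ver (Q, Y, Z) of ((A, B), J) \<Rightarrow> lam_min (Xi \<tau> A B J Q Y Z)))"

text \<open>Sample sets S_k of the learner-verifier loop (index 0 corresponds to S_1).\<close>
primrec samples :: "(((real^'n^'n) \<times> (real^'p^'n)) set \<Rightarrow> ((real^'n^'n) \<times> (real^'n^'p) \<times> (real^'n^'p)) option) \<Rightarrow>
    ((real^'n^'n) \<times> (real^'n^'p) \<times> (real^'n^'p) \<Rightarrow> ((real^'n^'n) \<times> (real^'p^'n)) \<times> 'p set) \<Rightarrow>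
    (real^'n^'n) \<times> (real^'p^'n) \<Rightarrow> nat \<Rightarrow> ((real^'n^'n) \<times> (real^'p^'n)) set" where
  "samples lrn ver p1 0 = {p1}"
| "samples lrn ver p1 (Suc k) =
     (case lrn (samples lrn ver p1 k) of
        None \<Rightarrow> samples lrn ver p1 k
      | Some s \<Rightarrow> insert (fst (ver s)) (samples lrn ver p1 k))"

definition satU :: "real^'p \<Rightarrow> real^'p \<Rightarrow> real^'p" where
  "satU ubar u = (\<chi> i. sgn (u$i) * min (ubar$i) \<bar>u$i\<bar>)"

definition is_clf_sat :: "((real^'n^'n) \<times> (real^'p^'n)) set \<Rightarrow> real^'n^'l \<Rightarrow> real^'p \<Rightarrow>
    real^'n^'n \<Rightarrow> real^'n^'p \<Rightarrow> bool" where
  "is_clf_sat \<Omega> L ubar P K \<longleftrightarrow>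
     (\<forall>x. x \<noteq> 0 \<longrightarrow> 0 < x \<bullet> (P *v x)) \<and>
     (\<forall>x. x \<bullet> (P *v x) \<le> 1 \<longrightarrow> (\<forall>i. (L$i) \<bullet> x \<le> 1)) \<and>
     (\<forall>x A B. (A, B) \<in> \<Omega> \<longrightarrow> x \<bullet> (P *v x) \<le> 1 \<longrightarrow> x \<noteq> 0 \<longrightarrow>
        (let x' = A *v x + B *v satU ubar (K *v x) in x' \<bullet> (P *v x') < x \<bullet> (P *v x)))"

end

theory Submission
  imports Defs
begin


definition mk3 :: "real^'n \<Rightarrow> real^'n \<Rightarrow> real^'n \<Rightarrow> real^('n+'n+'n)" where
  "mk3 y u z = (\<chi> r. case r of Inl a \<Rightarrow> y$a | Inr (Inl a) \<Rightarrow> u$a | Inr (Inr a) \<Rightarrow> z$a)"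

definition p1v :: "real^('n+'n+'n) \<Rightarrow> real^'n" where "p1v w = (\<chi> a. w$Inl a)"
definition p2v :: "real^('n+'n+'n) \<Rightarrow> real^'n" where "p2v w = (\<chi> a. w$Inr (Inl a))"
definition p3v :: "real^('n+'n+'n) \<Rightarrow> real^'n" where "p3v w = (\<chi> a. w$Inr (Inr a))"

lemma sum3: "(\<Sum>r\<in>(UNIV::('n::finite+'n+'n) set). f r) =
   (\<Sum>a\<in>UNIV. f (Inl a)) + (\<Sum>a\<in>UNIV. f (Inr (Inl a))) + (\<Sum>a\<in>UNIV. f (Inr (Inr a)))"
proof -
  have "(\<Sum>r\<in>(UNIV::('n+'n+'n) set). f r) = (\<Sum>r\<in>UNIV <+> (UNIV <+> UNIV). f r)" by simp
  also have "\<dots> = (\<Sum>a\<in>UNIV. f (Inl a)) + (\<Sum>r\<in>UNIV <+> UNIV. f (Inr r))"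
    by (subst sum.Plus) (auto simp: comp_def)
  also have "(\<Sum>r\<in>UNIV <+> UNIV. f (Inr r)) = (\<Sum>a\<in>UNIV. f (Inr (Inl a))) + (\<Sum>a\<in>UNIV. f (Inr (Inr a)))"
    by (subst sum.Plus) (auto simp: comp_def)
  finally show ?thesis by (simp add: add.assoc)
qed

lemma mk3_p: "mk3 (p1v w) (p2v w) (p3v w) = w"
  unfolding mk3_def p1v_def p2v_def p3v_def
  by (simp add: vec_eq_iff split: sum.split)

lemma p_mk3[simp]: "p1v (mk3 y u z) = y" "p2v (mk3 y u z) = u" "p3v (mk3 y u z) = z"
  unfolding mk3_def p1v_def p2v_def p3v_def by (simp_all add: vec_eq_iff)

lemma inner_mk3: "mk3 y u z \<bullet> mk3 y' u' z' = y \<bullet> y' + u \<bullet> u' + z \<bullet> z'"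
  unfolding inner_vec_def sum3 by (simp add: mk3_def)

definition MXi :: "real^'n^'n \<Rightarrow> real^'p^'n \<Rightarrow> 'p set \<Rightarrow> real^'n^'n \<Rightarrow>
    real^'n^'p \<Rightarrow> real^'n^'p \<Rightarrow> real^'n^'n" where
  "MXi A B J Q Y Z = A ** Q + B ** Emat J ** Y + B ** (mat 1 - Emat J) ** Z"

lemma Xi_quad_mk3:
  fixes Q :: "real^'n^'n"
  shows   "mk3 y u z \<bullet> (Xi \<tau> A B J Q Y Z *v mk3 y u z) =
     \<tau> * (y \<bullet> (Q *v y)) + (1 - \<tau>) * (u \<bullet> u) + 2 * (z \<bullet> (MXi A B J Q Y Z *v y)) + z \<bullet> (Q *v z)"
proof -
  define M where "M = MXi A B J Q Y Z"
  have X: "Xi \<tau> A B J Q Y Z = ((\<chi> r c. (case r of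
        Inl a \<Rightarrow> (case c of Inl b \<Rightarrow> \<tau> * Q$a$b | Inr (Inl b) \<Rightarrow> 0 | Inr (Inr b) \<Rightarrow> M$b$a)
      | Inr (Inl a) \<Rightarrow> (case c of Inl b \<Rightarrow> 0 | Inr (Inl b) \<Rightarrow> (1 - \<tau>) * (mat 1 :: real^'n^'n)$a$b
                                 | Inr (Inr b) \<Rightarrow> 0)
      | Inr (Inr a) \<Rightarrow> (case c of Inl b \<Rightarrow> M$a$b | Inr (Inl b) \<Rightarrow> 0 | Inr (Inr b) \<Rightarrow> Q$a$b))) :: real^('n+'n+'n)^('n+'n+'n))"
    unfolding Xi_def M_def MXi_def Let_def by simp
  have m1: "(\<Sum>b\<in>UNIV. (1 - \<tau>) * (mat 1 :: real^'n^'n)$a$b * u$b) = (1-\<tau>) * u$a" for a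
  proof -
    have "(1 - \<tau>) * (mat 1 :: real^'n^'n)$a$b * u$b = (if a = b then (1-\<tau>) * u$a else 0)" for b
      by (simp add: mat_def)
    then show ?thesis by simp
  qed
  have sw: "(\<Sum>a\<in>UNIV. y $ a * (\<Sum>b\<in>UNIV. M $ b $ a * z $ b)) = (\<Sum>a\<in>UNIV. z $ a * (\<Sum>b\<in>UNIV. M $ a $ b * y $ b))"
    by (simp add: sum_distrib_left algebra_simps) (rule sum.swap)
  show ?thesis
    unfolding X M_def[symmetric]
    unfolding inner_vec_def matrix_vector_mult_def sum3
    apply (simp add: mk3_def m1)
    apply (simp only: distrib_left sum.distrib sw)
    apply (simp add: sum_distrib_left algebra_simps)
    done
qed

definition mk2 :: "real \<Rightarrow> real^'n \<Rightarrow> real^(unit+'n)" where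
  "mk2 s v = (\<chi> i. case i of Inl _ \<Rightarrow> s | Inr b \<Rightarrow> v$b)"

lemma sum2: "(\<Sum>r\<in>(UNIV::(unit+'n::finite) set). f r) = f (Inl ()) + (\<Sum>a\<in>UNIV. f (Inr a))"
proof -
  have "(\<Sum>r\<in>(UNIV::(unit+'n) set). f r) = (\<Sum>r\<in>UNIV <+> UNIV. f r)" by simp
  also have "\<dots> = (\<Sum>a\<in>UNIV. f (Inl a)) + (\<Sum>r\<in>UNIV. f (Inr r))"
    by (subst sum.Plus) (auto simp: comp_def)
  finally show ?thesis by (simp add: UNIV_unit)
qed

lemma blk2_quad:
  "mk2 s v \<bullet> (blk2 a r c Q *v mk2 s v) = a * s * s + s * (r \<bullet> v) + s * (c \<bullet> v) + v \<bullet> (Q *v v)"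
  unfolding inner_vec_def matrix_vector_mult_def sum2
  by (simp add: mk2_def blk2_def sum_distrib_left algebra_simps sum.distrib)

lemma mv_bound:
  fixes A :: "real^'n^'m"
  shows "norm (A *v x) \<le> (\<Sum>i\<in>UNIV. \<Sum>j\<in>UNIV. \<bar>A $ i $ j\<bar>) * norm x"
proof -
  have "norm (A *v x) \<le> (\<Sum>i\<in>UNIV. \<bar>(A *v x) $ i\<bar>)"
    by (rule norm_le_l1_cart)
  also have "\<dots> \<le> (\<Sum>i\<in>UNIV. \<Sum>j\<in>UNIV. \<bar>A $ i $ j\<bar> * norm x)"
  proof (rule sum_mono)
    fix i
    have "\<bar>(A *v x) $ i\<bar> \<le> \<bar>\<Sum>j\<in>UNIV. A $ i $ j * x $ j\<bar>"
      by (simp add: matrix_vector_mult_def)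
    also have "\<dots> \<le> (\<Sum>j\<in>UNIV. \<bar>A $ i $ j * x $ j\<bar>)"
      by (rule sum_abs)
    also have "\<dots> \<le> (\<Sum>j\<in>UNIV. \<bar>A $ i $ j\<bar> * norm x)"
      by (rule sum_mono) (simp add: abs_mult component_le_norm_cart mult_left_mono)
    finally show "\<bar>(A *v x) $ i\<bar> \<le> (\<Sum>j\<in>UNIV. \<bar>A $ i $ j\<bar> * norm x)" .
  qed
  finally show ?thesis
    by (simp add: sum_distrib_right)
qed

lemma quad_abs_bound:
  fixes M :: "real^'n^'n"
  shows "\<bar>x \<bullet> (M *v x)\<bar> \<le> (\<Sum>i\<in>UNIV. \<Sum>j\<in>UNIV. \<bar>M $ i $ j\<bar>) * (norm x * norm x)"
proof -
  have "\<bar>x \<bullet> (M *v x)\<bar> \<le> norm x * norm (M *v x)" by (rule Cauchy_Schwarz_ineq2)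
  also have "\<dots> \<le> norm x * ((\<Sum>i\<in>UNIV. \<Sum>j\<in>UNIV. \<bar>M $ i $ j\<bar>) * norm x)"
    by (rule mult_left_mono[OF mv_bound]) simp
  finally show ?thesis by (simp add: algebra_simps)
qed

lemma lam_min_bdd:
  fixes M :: "real^'n^'n"
  shows "bdd_below {x \<bullet> (M *v x) | x. norm x = 1}"
proof
  fix y assume "y \<in> {x \<bullet> (M *v x) | x. norm x = 1}"
  then obtain x where x: "norm x = 1" "y = x \<bullet> (M *v x)" by auto
  have "\<bar>y\<bar> \<le> (\<Sum>i\<in>UNIV. \<Sum>j\<in>UNIV. \<bar>M $ i $ j\<bar>)"
    using quad_abs_bound[of x M] x by simp
  then show "- (\<Sum>i\<in>UNIV. \<Sum>j\<in>UNIV. \<bar>M $ i $ j\<bar>) \<le> y" by linarith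
qed

lemma lam_min_le:
  fixes M :: "real^'n^'n"
  shows "lam_min M * (x \<bullet> x) \<le> x \<bullet> (M *v x)"
proof (cases "x = 0")
  case True then show ?thesis by simp
next
  case False
  define u where "u = (1 / norm x) *\<^sub>R x"
  have nu: "norm u = 1" using False by (simp add: u_def)
  have "lam_min M \<le> u \<bullet> (M *v u)"
    unfolding lam_min_def using nu by (intro cInf_lower[OF _ lam_min_bdd]) auto
  also have "u \<bullet> (M *v u) = (x \<bullet> (M *v x)) / (norm x * norm x)"
    by (simp add: u_def matrix_vector_mult_scaleR)
  finally have "lam_min M * (norm x * norm x) \<le> x \<bullet> (M *v x)"
    using False by (simp add: field_simps)
  then show ?thesis by (simp add: dot_square_norm power2_eq_square)
qed

lemma lam_min_ge:
  fixes M :: "real^'n^'n"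
  assumes "\<And>x. norm x = 1 \<Longrightarrow> c \<le> x \<bullet> (M *v x)"
  shows "c \<le> lam_min M"
proof -
  obtain i :: 'n where True by auto
  have "norm (axis i (1::real)) = 1" by simp
  then have ne: "{x \<bullet> (M *v x) | x. norm x = 1} \<noteq> {}" by blast
  show ?thesis unfolding lam_min_def
    by (rule cInf_greatest[OF ne]) (use assms in auto)
qed

definition Wm :: "'p set \<Rightarrow> real^'n^'p \<Rightarrow> real^'n^'p \<Rightarrow> real^'n^'p" where
  "Wm J Y Z = (\<chi> k j. if k \<in> J then Y$k$j else Z$k$j)"

lemma Emat_mv: "Emat J *v v = (\<chi> i. if i \<in> J then v$i else 0)"
proof -
  have "(\<Sum>j\<in>UNIV. (if i = j \<and> i \<in> J then 1 else 0) * v $ j) = (if i \<in> J then v$i else 0)" for i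
  proof -
    have "(if i = j \<and> i \<in> J then 1 else 0) * v $ j = (if j = i then (if i \<in> J then v$i else 0) else 0)" for j
      by auto
    then show ?thesis by simp
  qed
  then show ?thesis by (simp add: Emat_def matrix_vector_mult_def vec_eq_iff)
qed

lemma Emat_mv': "(mat 1 - Emat J) *v v = (\<chi> i. if i \<in> J then 0 else v$i)"
  by (simp add: matrix_vector_mult_diff_rdistrib Emat_mv vec_eq_iff)

lemma MXi_entry:
  "MXi A B J Q Y Z $ i $ j = (\<Sum>k\<in>UNIV. A$i$k * Q$k$j) + (\<Sum>k\<in>UNIV. B$i$k * Wm J Y Z $k$j)"
proof -
  have e1: "(Emat J ** Y) $ k $ j = (if k \<in> J then Y$k$j else 0)" for k j
  proof -
    have "(Emat J ** Y) $ k $ j = (Emat J *v (column j Y)) $ k"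
      by (simp add: matrix_matrix_mult_def matrix_vector_mult_def column_def)
    then show ?thesis by (simp add: Emat_mv column_def)
  qed
  have e2: "((mat 1 - Emat J) ** Z) $ k $ j = (if k \<in> J then 0 else Z$k$j)" for k j
  proof -
    have "((mat 1 - Emat J) ** Z) $ k $ j = ((mat 1 - Emat J) *v (column j Z)) $ k"
      by (simp add: matrix_matrix_mult_def matrix_vector_mult_def column_def)
    then show ?thesis by (simp add: Emat_mv' column_def)
  qed
  have "MXi A B J Q Y Z = A ** Q + B ** (Emat J ** Y + (mat 1 - Emat J) ** Z)"
    by (simp add: MXi_def matrix_add_ldistrib matrix_mul_assoc)
  also have "Emat J ** Y + (mat 1 - Emat J) ** Z = Wm J Y Z"
    by (simp add: vec_eq_iff e1 e2 Wm_def)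
  finally show ?thesis by (simp add: matrix_matrix_mult_def)
qed

lemma sq_ineq: fixes a b :: real assumes "0 \<le> a" "0 \<le> b" shows "a*b \<le> a^2 + b^2"
proof -
  have "0 \<le> (a - b)^2" by simp
  then have "0 \<le> a*a - 2*a*b + b*b" by (simp add: power2_eq_square algebra_simps)
  moreover have "0 \<le> a*b" using assms by simp
  ultimately show ?thesis by (simp add: power2_eq_square)
qed

lemma Xi_lip:
  fixes Q :: "real^'n^'n" and Y Z :: "real^'n^'p" and \<eta> R :: real
  assumes Qb: "\<And>k j. \<bar>Q$k$j\<bar> \<le> \<eta>" and Yb: "\<And>k j. \<bar>Y$k$j\<bar> \<le> R" and Zb: "\<And>k j. \<bar>Z$k$j\<bar> \<le> R"
  shows "\<bar>w \<bullet> (Xi \<tau> A B J Q Y Z *v w) - w \<bullet> (Xi \<tau> A' B' J Q Y Z *v w)\<bar>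
     \<le> (2 * (CARD('n) * CARD('n) * (CARD('n) * \<eta> + CARD('p) * R))) * dist (A, B) (A', B') * (w \<bullet> w)"
proof -
  define d where "d = dist (A, B) (A', B')"
  define D where "D = MXi A B J Q Y Z - MXi A' B' J Q Y Z"
  define y where "y = p1v w"
  define u where "u = p2v w"
  define z where "z = p3v w"
  have w: "w = mk3 y u z" unfolding y_def u_def z_def by (simp add: mk3_p)
  have dA: "\<bar>(A - A')$i$k\<bar> \<le> d" for i k
  proof -
    have "\<bar>(A - A')$i$k\<bar> \<le> norm ((A - A')$i)" by (rule component_le_norm_cart)
    also have "\<dots> \<le> norm (A - A')" by (rule Finite_Cartesian_Product.norm_nth_le)
    also have "\<dots> \<le> norm (A - A', B - B')" by (rule norm_fst_le)
    finally show ?thesis by (simp add: d_def dist_norm)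
  qed
  have dB: "\<bar>(B - B')$i$k\<bar> \<le> d" for i k
  proof -
    have "\<bar>(B - B')$i$k\<bar> \<le> norm ((B - B')$i)" by (rule component_le_norm_cart)
    also have "\<dots> \<le> norm (B - B')" by (rule Finite_Cartesian_Product.norm_nth_le)
    also have "\<dots> \<le> norm (A - A', B - B')" by (rule norm_snd_le)
    finally show ?thesis by (simp add: d_def dist_norm)
  qed
  have Wb: "\<bar>Wm J Y Z $k$j\<bar> \<le> R" for k j using Yb Zb by (simp add: Wm_def)
  have d0: "0 \<le> d" by (simp add: d_def)
  have Dij: "\<bar>D$i$j\<bar> \<le> CARD('n) * d * \<eta> + CARD('p) * d * R" for i j
  proof -
    have "D$i$j = (\<Sum>k\<in>UNIV. (A - A')$i$k * Q$k$j) + (\<Sum>k\<in>UNIV. (B - B')$i$k * Wm J Y Z $k$j)"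
      by (simp add: D_def MXi_entry sum_subtractf algebra_simps)
    also have "\<bar>\<dots>\<bar> \<le> (\<Sum>k\<in>(UNIV::'n set). d * \<eta>) + (\<Sum>k\<in>(UNIV::'p set). d * R)"
    proof -
      have "\<bar>\<Sum>k\<in>UNIV. (A - A')$i$k * Q$k$j\<bar> \<le> (\<Sum>k\<in>(UNIV::'n set). d * \<eta>)"
        by (rule order_trans[OF sum_abs], rule sum_mono)
           (simp only: abs_mult, rule mult_mono[OF dA Qb d0 abs_ge_zero])
      moreover have "\<bar>\<Sum>k\<in>UNIV. (B - B')$i$k * Wm J Y Z $k$j\<bar> \<le> (\<Sum>k\<in>(UNIV::'p set). d * R)"
        by (rule order_trans[OF sum_abs], rule sum_mono)
           (simp only: abs_mult, rule mult_mono[OF dB Wb d0 abs_ge_zero])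
      ultimately show ?thesis by (rule order_trans[OF abs_triangle_ineq add_mono])
    qed
    finally show ?thesis by simp
  qed
  have SD: "(\<Sum>i\<in>UNIV. \<Sum>j\<in>UNIV. \<bar>D $ i $ j\<bar>) \<le> CARD('n) * CARD('n) * (CARD('n) * \<eta> + CARD('p) * R) * d"
  proof -
    have "(\<Sum>i\<in>UNIV. \<Sum>j\<in>UNIV. \<bar>D $ i $ j\<bar>) \<le> (\<Sum>i\<in>(UNIV::'n set). \<Sum>j\<in>(UNIV::'n set). CARD('n) * d * \<eta> + CARD('p) * d * R)"
      by (intro sum_mono Dij)
    then show ?thesis by (simp add: algebra_simps)
  qed
  have diff: "w \<bullet> (Xi \<tau> A B J Q Y Z *v w) - w \<bullet> (Xi \<tau> A' B' J Q Y Z *v w) = 2 * (z \<bullet> (D *v y))"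
    unfolding w Xi_quad_mk3 D_def matrix_vector_mult_diff_rdistrib inner_diff_right by (simp add: right_diff_distrib)
  have "\<bar>z \<bullet> (D *v y)\<bar> \<le> norm z * norm (D *v y)" by (rule Cauchy_Schwarz_ineq2)
  also have "\<dots> \<le> norm z * ((\<Sum>i\<in>UNIV. \<Sum>j\<in>UNIV. \<bar>D $ i $ j\<bar>) * norm y)"
    by (rule mult_left_mono[OF mv_bound]) simp
  also have "\<dots> \<le> norm z * ((CARD('n) * CARD('n) * (CARD('n) * \<eta> + CARD('p) * R) * d) * norm y)"
    by (intro mult_left_mono mult_right_mono SD) auto
  also have "\<dots> = (CARD('n) * CARD('n) * (CARD('n) * \<eta> + CARD('p) * R) * d) * (norm y * norm z)"
    by simp
  also have "\<dots> \<le> (CARD('n) * CARD('n) * (CARD('n) * \<eta> + CARD('p) * R) * d) * (w \<bullet> w)"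
  proof (rule mult_left_mono)
    have "norm y * norm z \<le> (norm y ^ 2 + norm z ^ 2)" 
      by (rule sq_ineq) auto
    also have "\<dots> \<le> w \<bullet> w" unfolding w inner_mk3 by (simp add: dot_square_norm)
    finally show "norm y * norm z \<le> w \<bullet> w" .
    have "0 \<le> \<eta>" using Qb[of k j] by linarith
    moreover have "0 \<le> R" using Yb[of k j] by linarith
    ultimately show "0 \<le> CARD('n) * CARD('n) * (CARD('n) * \<eta> + CARD('p) * R) * d" using d0 by simp
  qed
  finally show ?thesis unfolding diff d_def by simp
qed



lemma axis_quad: "axis i (1::real) \<bullet> (Q *v axis j 1) = Q$i$j"
  by (simp add: inner_axis' matrix_vector_mult_basis column_def)

lemma quad_add: fixes Q :: "real^'n^'n" shows
  "(a + b) \<bullet> (Q *v (a + b)) = a \<bullet> (Q *v a) + a \<bullet> (Q *v b) + b \<bullet> (Q *v a) + b \<bullet> (Q *v b)"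
  by (simp add: matrix_vector_right_distrib inner_add_left inner_add_right)

lemma quad_diff: fixes Q :: "real^'n^'n" shows
  "(a - b) \<bullet> (Q *v (a - b)) = a \<bullet> (Q *v a) - a \<bullet> (Q *v b) - b \<bullet> (Q *v a) + b \<bullet> (Q *v b)"
  by (simp add: matrix_vector_mult_diff_distrib inner_diff_left inner_diff_right)

lemma Q_entry_bound:
  fixes Q :: "real^'n^'n" and \<eta> :: real
  assumes sym: "transpose Q = Q" and pos: "\<And>v. 0 \<le> v \<bullet> (Q *v v)"
    and up: "\<And>v. v \<bullet> (Q *v v) \<le> \<eta> * (v \<bullet> v)"
  shows "\<bar>Q$i$j\<bar> \<le> \<eta>"
proof (cases "i = j")
  case True
  have "0 \<le> Q$i$i" using pos[of "axis i 1"] by (simp add: axis_quad)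
  moreover have "Q$i$i \<le> \<eta>" using up[of "axis i 1"] by (simp add: axis_quad inner_axis_axis)
  ultimately show ?thesis using True by simp
next
  case False
  have s: "Q$j$i = Q$i$j" using arg_cong[OF sym, of "\<lambda>M. M$i$j"] by (simp add: transpose_def)
  have ii: "0 \<le> Q$i$i" using pos[of "axis i 1"] by (simp add: axis_quad)
  have jj: "0 \<le> Q$j$j" using pos[of "axis j 1"] by (simp add: axis_quad)
  have vv1: "(axis i 1 + axis j 1) \<bullet> (axis i 1 + axis j (1::real)) = 2"
    using False by (simp add: inner_add_left inner_add_right inner_axis_axis)
  have vv2: "(axis i 1 - axis j 1) \<bullet> (axis i 1 - axis j (1::real)) = 2"
    using False by (simp add: inner_diff_left inner_diff_right inner_axis_axis)
  have p1: "(axis i 1 + axis j 1) \<bullet> (Q *v (axis i 1 + axis j (1::real))) = Q$i$i + 2 * Q$i$j + Q$j$j"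
    unfolding quad_add axis_quad s by simp
  have p2: "(axis i 1 - axis j 1) \<bullet> (Q *v (axis i 1 - axis j (1::real))) = Q$i$i - 2 * Q$i$j + Q$j$j"
    unfolding quad_diff axis_quad s by simp
  have a1: "Q$i$i + 2 * Q$i$j + Q$j$j \<le> 2 * \<eta>" using up[of "axis i 1 + axis j 1"] p1 vv1 by simp
  have a2: "Q$i$i - 2 * Q$i$j + Q$j$j \<le> 2 * \<eta>" using up[of "axis i 1 - axis j 1"] p2 vv2 by simp
  have a3: "0 \<le> Q$i$i + 2 * Q$i$j + Q$j$j" using pos[of "axis i 1 + axis j 1"] p1 by simp
  have a4: "0 \<le> Q$i$i - 2 * Q$i$j + Q$j$j" using pos[of "axis i 1 - axis j 1"] p2 by simp
  show ?thesis using a1 a2 a3 a4 by linarith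
qed

lemma smat: "((c::real) *\<^sub>R mat 1 :: real^'n^'n) *v v = c *\<^sub>R v"
proof -
  have "((c *\<^sub>R mat 1 :: real^'n^'n)$i$j * v$j) = (if i = j then c * v$i else 0)" for i j
    by (simp add: mat_def)
  then show ?thesis by (simp add: matrix_vector_mult_def vec_eq_iff)
qed

lemma psd_quad: "psd M \<Longrightarrow> 0 \<le> v \<bullet> (M *v v)" by (simp add: psd_def)

lemma psd_eta:
  fixes Q :: "real^'n^'n"
  assumes "psd (\<eta> *\<^sub>R mat 1 - Q)"
  shows "transpose Q = Q" "v \<bullet> (Q *v v) \<le> \<eta> * (v \<bullet> v)"
proof -
  have t: "transpose (\<eta> *\<^sub>R mat 1 - Q) = \<eta> *\<^sub>R mat 1 - Q" using assms by (simp add: psd_def)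
  show "transpose Q = Q"
  proof -
    have "Q$j$i = Q$i$j" for i j
      using arg_cong[OF t, of "\<lambda>M. M$i$j"] by (cases "i = j") (auto simp: transpose_def mat_def)
    then show ?thesis by (simp add: transpose_def vec_eq_iff)
  qed
  have "0 \<le> v \<bullet> ((\<eta> *\<^sub>R mat 1 - Q) *v v)" using assms by (simp add: psd_def)
  also have "(\<eta> *\<^sub>R mat 1 - Q) *v v = \<eta> *\<^sub>R v - Q *v v"
    by (simp add: matrix_vector_mult_diff_rdistrib smat)
  finally show "v \<bullet> (Q *v v) \<le> \<eta> * (v \<bullet> v)" by (simp add: inner_diff_right)
qed

lemma psd_eps:
  fixes M :: "real^'n^'n"
  assumes "psd (M - \<epsilon> *\<^sub>R mat 1)"
  shows "\<epsilon> * (v \<bullet> v) \<le> v \<bullet> (M *v v)"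
proof -
  have "0 \<le> v \<bullet> ((M - \<epsilon> *\<^sub>R mat 1) *v v)" using assms by (simp add: psd_def)
  also have "(M - \<epsilon> *\<^sub>R mat 1) *v v = M *v v - \<epsilon> *\<^sub>R v"
    by (simp add: matrix_vector_mult_diff_rdistrib smat)
  finally show ?thesis by (simp add: inner_diff_right)
qed

lemma q_convex:
  fixes P :: "real^'n^'n"
  assumes pos: "\<And>v. 0 \<le> v \<bullet> (P *v v)" and t: "0 \<le> t" "t \<le> 1"
  shows "(t *\<^sub>R a + (1-t) *\<^sub>R b) \<bullet> (P *v (t *\<^sub>R a + (1-t) *\<^sub>R b))
         \<le> t * (a \<bullet> (P *v a)) + (1-t) * (b \<bullet> (P *v b))"
proof -
  define aa where "aa = a \<bullet> (P *v a)"
  define ab where "ab = a \<bullet> (P *v b)"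
  define ba where "ba = b \<bullet> (P *v a)"
  define bb where "bb = b \<bullet> (P *v b)"
  have L: "(t *\<^sub>R a + (1-t) *\<^sub>R b) \<bullet> (P *v (t *\<^sub>R a + (1-t) *\<^sub>R b))
     = t*t*aa + t*(1-t)*ab + (1-t)*t*ba + (1-t)*(1-t)*bb"
    unfolding quad_add by (simp add: matrix_vector_mult_scaleR aa_def ab_def ba_def bb_def)
  have D: "0 \<le> aa - ab - ba + bb" using pos[of "a - b"] unfolding quad_diff aa_def ab_def ba_def bb_def .
  have "0 \<le> t * (1 - t) * (aa - ab - ba + bb)" using D t by simp
  then show ?thesis unfolding L aa_def[symmetric] bb_def[symmetric]
    by (simp add: algebra_simps)
qed

lemma box_vertex:
  fixes g :: "real^'p \<Rightarrow> real"
  assumes conv: "\<And>u v t. 0 \<le> t \<Longrightarrow> t \<le> 1 \<Longrightarrow> g (t *\<^sub>R u + (1-t) *\<^sub>R v) \<le> t * g u + (1-t) * g v"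
    and vert: "\<And>J. g (\<chi> i. if i \<in> J then k$i else h$i) < c"
    and box: "\<And>i. \<exists>t. 0 \<le> t \<and> t \<le> 1 \<and> u$i = t * k$i + (1-t) * h$i"
  shows "g u < c"
proof -
  have main: "\<forall>u. (\<forall>i. i \<notin> F \<longrightarrow> u$i = k$i \<or> u$i = h$i) \<longrightarrow>
      (\<forall>i\<in>F. \<exists>t. 0 \<le> t \<and> t \<le> 1 \<and> u$i = t * k$i + (1-t) * h$i) \<longrightarrow> g u < c"
    if "finite F" for F
    using that
  proof (induction F rule: finite_induct)
    case empty
    show ?case
    proof (intro allI impI)
      fix u :: "real^'p"
      assume a: "\<forall>i. i \<notin> {} \<longrightarrow> u$i = k$i \<or> u$i = h$i"
      have "u = (\<chi> i. if i \<in> {i. u$i = k$i} then k$i else h$i)"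
        using a by (auto simp: vec_eq_iff)
      then show "g u < c" using vert by metis
    qed
  next
    case (insert a F)
    show ?case
    proof (intro allI impI)
      fix u :: "real^'p"
      assume o: "\<forall>i. i \<notin> insert a F \<longrightarrow> u$i = k$i \<or> u$i = h$i"
        and b: "\<forall>i\<in>insert a F. \<exists>t. 0 \<le> t \<and> t \<le> 1 \<and> u$i = t * k$i + (1-t) * h$i"
      obtain t where t: "0 \<le> t" "t \<le> 1" "u$a = t * k$a + (1-t) * h$a" using b by auto
      define u1 where "u1 = (\<chi> i. if i = a then k$i else u$i)"
      define u2 where "u2 = (\<chi> i. if i = a then h$i else u$i)"
      have uu: "u = t *\<^sub>R u1 + (1-t) *\<^sub>R u2"
        using t(3) by (auto simp: vec_eq_iff u1_def u2_def algebra_simps)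
      have g1: "g u1 < c" using insert.IH o b insert.hyps(2) by (auto simp: u1_def)
      have g2: "g u2 < c" using insert.IH o b insert.hyps(2) by (auto simp: u2_def)
      have "g u \<le> t * g u1 + (1-t) * g u2" unfolding uu by (rule conv[OF t(1,2)])
      also have "\<dots> < c"
      proof (cases "t = 0")
        case True then show ?thesis using g2 by simp
      next
        case False
        then have "t * g u1 < t * c" using t g1 by simp
        moreover have "(1-t) * g u2 \<le> (1-t) * c" using t g2 by (intro mult_left_mono) auto
        ultimately show ?thesis by (simp add: algebra_simps)
      qed
      finally show "g u < c" .
    qed
  qed
  show ?thesis using main[of UNIV] box by auto
qed



lemma smat_mv: "((c::real) *\<^sub>R (M::real^'n^'m)) *v y = c *\<^sub>R (M *v y)"
  by (simp add: vec_eq_iff matrix_vector_mult_def sum_distrib_left mult.assoc real_scaleR_def)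

lemma MXi_lin:
  "MXi (u *\<^sub>R A + v *\<^sub>R A') (u *\<^sub>R B + v *\<^sub>R B') J Q Y Z = u *\<^sub>R MXi A B J Q Y Z + v *\<^sub>R MXi A' B' J Q Y Z"
  by (simp add: vec_eq_iff MXi_entry sum.distrib sum_distrib_left algebra_simps)

lemma Xi_affine:
  fixes Q :: "real^'n^'n"
  assumes "u + v = 1"
  shows "w \<bullet> (Xi \<tau> (u *\<^sub>R A + v *\<^sub>R A') (u *\<^sub>R B + v *\<^sub>R B') J Q Y Z *v w)
    = u * (w \<bullet> (Xi \<tau> A B J Q Y Z *v w)) + v * (w \<bullet> (Xi \<tau> A' B' J Q Y Z *v w))"
proof -
  have w: "w = mk3 (p1v w) (p2v w) (p3v w)" by (simp add: mk3_p)
  have v: "v = 1 - u" using assms by simp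
  show ?thesis
    apply (subst (1 2 3 4 5 6) w)
    unfolding Xi_quad_mk3 MXi_lin matrix_vector_mult_add_rdistrib smat_mv inner_add_right inner_scaleR_right v
    by (simp add: algebra_simps)
qed

lemma hull_pos:
  fixes S :: "((real^'n^'n) \<times> (real^'p^'n)) set" and Q :: "real^'n^'n"
  assumes fin: "finite S"
    and V: "\<forall>(A, B) \<in> verts S. \<forall>J. psd (Xi \<tau> A B J Q Y Z - \<epsilon> *\<^sub>R mat 1)"
    and AB: "(A, B) \<in> S"
  shows "\<epsilon> * (w \<bullet> w) \<le> w \<bullet> (Xi \<tau> A B J Q Y Z *v w)"
proof -
  define T where "T = {p. \<forall>J w. \<epsilon> * (w \<bullet> w) \<le> w \<bullet> (Xi \<tau> (fst p) (snd p) J Q Y Z *v w)}"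
  have vT: "verts S \<subseteq> T" using V psd_eps by (fastforce simp: T_def)
  have cT: "convex T"
    unfolding convex_def
  proof (intro ballI allI impI)
    fix p q :: "(real^'n^'n) \<times> (real^'p^'n)" and u v :: real
    assume p: "p \<in> T" and q: "q \<in> T" and uv1: "0 \<le> u" and uv2: "0 \<le> v" and uv3: "u + v = 1"
    have uv: "0 \<le> u \<and> 0 \<le> v \<and> u + v = 1" using uv1 uv2 uv3 by simp
    show "u *\<^sub>R p + v *\<^sub>R q \<in> T"
      unfolding T_def
    proof (intro CollectI allI)
      fix J and w :: "real^('n+'n+'n)"
      have "\<epsilon> * (w \<bullet> w) = u * (\<epsilon> * (w \<bullet> w)) + v * (\<epsilon> * (w \<bullet> w))" using uv by algebra
      also have "\<dots> \<le> u * (w \<bullet> (Xi \<tau> (fst p) (snd p) J Q Y Z *v w)) + v * (w \<bullet> (Xi \<tau> (fst q) (snd q) J Q Y Z *v w))"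
        using p q uv unfolding T_def by (intro add_mono mult_left_mono) auto
      also have "\<dots> = w \<bullet> (Xi \<tau> (fst (u *\<^sub>R p + v *\<^sub>R q)) (snd (u *\<^sub>R p + v *\<^sub>R q)) J Q Y Z *v w)"
        using Xi_affine[of u v w \<tau> "fst p" "fst q" "snd p" "snd q" J Q Y Z] uv by simp
      finally show "\<epsilon> * (w \<bullet> w) \<le> w \<bullet> (Xi \<tau> (fst (u *\<^sub>R p + v *\<^sub>R q)) (snd (u *\<^sub>R p + v *\<^sub>R q)) J Q Y Z *v w)" .
    qed
  qed
  have "S \<subseteq> convex hull S" by (rule hull_subset)
  also have "convex hull S = convex hull (verts S)"
    unfolding verts_def by (rule Krein_Milman_polytope[OF fin])
  also have "\<dots> \<subseteq> T" by (intro hull_minimal vT cT)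
  finally show ?thesis using AB unfolding T_def by auto
qed

lemma sym_inner:
  fixes Q :: "real^'n^'n"
  assumes "transpose Q = Q"
  shows "(Q *v a) \<bullet> b = a \<bullet> (Q *v b)"
proof -
  have "Q *v a = a v* transpose Q" by simp
  then have "Q *v a = a v* Q" using assms by simp
  then show ?thesis by (simp add: dot_lmul_matrix)
qed

lemma sat_box:
  fixes c hh kk :: real
  assumes c: "0 < c" and h: "\<bar>hh\<bar> \<le> c"
  shows "\<exists>t. 0 \<le> t \<and> t \<le> 1 \<and> sgn kk * min c \<bar>kk\<bar> = t * kk + (1-t) * hh"
proof (cases "\<bar>kk\<bar> \<le> c")
  case True
  then have "sgn kk * min c \<bar>kk\<bar> = kk" by (simp add: min_def sgn_mult_abs)
  then show ?thesis by (intro exI[of _ 1]) simp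
next
  case False
  show ?thesis
  proof (cases "kk > 0")
    case True
    then have e: "sgn kk * min c \<bar>kk\<bar> = c" using False by (simp add: min_def)
    have p: "kk - hh > 0" using True False h by linarith
    define t where "t = (c - hh) / (kk - hh)"
    have "0 \<le> t" using p h by (simp add: t_def)
    moreover have "t \<le> 1" using p False True by (simp add: t_def divide_le_eq_1)
    moreover have "t * kk + (1-t) * hh = c"
    proof -
      have "t * kk + (1-t) * hh = hh + t * (kk - hh)" by (simp add: algebra_simps)
      also have "\<dots> = c" using p by (simp add: t_def)
      finally show ?thesis .
    qed
    ultimately show ?thesis using e by metis
  next
    case nk: False
    then have kn: "kk < 0" using False c by auto
    then have e: "sgn kk * min c \<bar>kk\<bar> = - c" using False by (simp add: min_def)
    have p: "hh - kk > 0" using kn False h by linarith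
    define t where "t = (hh + c) / (hh - kk)"
    have "0 \<le> t" using p h by (simp add: t_def)
    moreover have "t \<le> 1" using p False kn by (simp add: t_def divide_le_eq_1)
    moreover have "t * kk + (1-t) * hh = - c"
    proof -
      have "t * kk + (1-t) * hh = hh - t * (hh - kk)" by (simp add: algebra_simps)
      also have "\<dots> = - c" using p by (simp add: t_def)
      finally show ?thesis .
    qed
    ultimately show ?thesis using e by metis
  qed
qed



lemma mv_neg[simp]: "(A::real^'n^'m) *v (- y) = - (A *v y)"
  by (simp add: vec_eq_iff matrix_vector_mult_def sum_negf)

lemma MXi_mv:
  "MXi A B J Q Y Z *v y = A *v (Q *v y) + B *v (\<chi> i. if i \<in> J then (Y *v y)$i else (Z *v y)$i)"
proof -
  have "MXi A B J Q Y Z *v y = A *v (Q *v y) + B *v (Emat J *v (Y *v y)) + B *v ((mat 1 - Emat J) *v (Z *v y))"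
    by (simp add: MXi_def matrix_vector_mult_add_rdistrib matrix_vector_mul_assoc matrix_mul_assoc)
  also have "\<dots> = A *v (Q *v y) + B *v (Emat J *v (Y *v y) + (mat 1 - Emat J) *v (Z *v y))"
    by (simp add: matrix_vector_right_distrib)
  also have "Emat J *v (Y *v y) + (mat 1 - Emat J) *v (Z *v y) = (\<chi> i. if i \<in> J then (Y *v y)$i else (Z *v y)$i)"
    by (simp add: Emat_mv Emat_mv' vec_eq_iff)
  finally show ?thesis .
qed

lemma clf:
  fixes Q :: "real^'n^'n" and Y Z :: "real^'n^'p" and L :: "real^'n^'l" and ubar :: "real^'p"
    and \<Omega> :: "((real^'n^'n) \<times> (real^'p^'n)) set"
  assumes pos: "\<And>A B J w. (A, B) \<in> \<Omega> \<Longrightarrow> w \<noteq> 0 \<Longrightarrow> 0 < w \<bullet> (Xi \<tau> A B J Q Y Z *v w)"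
    and ne: "(A0, B0) \<in> \<Omega>" and tau: "\<tau> \<le> 1"
    and feas: "sdp_feasible \<tau> \<epsilon> \<eta> L ubar YY ZZ V Q Y Z"
    and ub: "\<forall>i. 0 < ubar$i"
  shows "is_clf_sat \<Omega> L ubar (matrix_inv Q) (Y ** matrix_inv Q)"
proof -
  from feas have etaQ: "psd (\<eta> *\<^sub>R mat 1 - Q)"
    and Lc: "\<And>i. psd (blk2 1 ((L$i) v* Q) (Q *v (L$i)) Q)"
    and Uc: "\<And>i. psd (blk2 ((ubar$i)^2) (Z$i) (Z$i) Q)"
    by (simp_all add: sdp_feasible_def)
  have sym: "transpose Q = Q" using psd_eta(1)[OF etaQ] .
  have Qpos: "0 < v \<bullet> (Q *v v)" if v0: "v \<noteq> 0" for v
  proof -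
    have "mk3 0 0 v \<noteq> 0"
    proof
      assume "mk3 0 0 v = 0"
      then have "v = p3v 0" by (metis p_mk3(3))
      then show False using v0 by (simp add: p3v_def vec_eq_iff)
    qed
    from pos[OF ne this, of "{}"] show ?thesis by (simp add: Xi_quad_mk3)
  qed
  have Qnn: "0 \<le> v \<bullet> (Q *v v)" for v
    using Qpos[of v] by (cases "v = 0") auto
  have inj: "inj ((*v) Q)"
  proof (rule injI)
    fix a b assume "Q *v a = Q *v b"
    then have "Q *v (a - b) = 0" by (simp add: matrix_vector_mult_diff_distrib)
    then have "(a - b) \<bullet> (Q *v (a - b)) = 0" by simp
    then have "a - b = 0" using Qpos[of "a - b"] by fastforce
    then show "a = b" by simp
  qed
  have inv: "invertible Q"
    using inj by (simp add: invertible_left_inverse matrix_left_invertible_injective)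
  define P where "P = matrix_inv Q"
  have QP: "Q ** P = mat 1"
  proof -
    have "\<exists>A'. Q ** A' = mat 1 \<and> A' ** Q = mat 1" using inv by (simp add: invertible_def)
    then have "Q ** matrix_inv Q = mat 1 \<and> matrix_inv Q ** Q = mat 1"
      unfolding matrix_inv_def by (rule someI_ex)
    then show ?thesis by (simp add: P_def)
  qed
  have QPv: "Q *v (P *v x) = x" for x by (simp add: matrix_vector_mul_assoc QP)
  have Vq: "x \<bullet> (P *v x) = (P *v x) \<bullet> (Q *v (P *v x))" for x
    by (simp add: QPv inner_commute)
  have Pnn: "0 \<le> x \<bullet> (P *v x)" for x using Vq[of x] Qnn[of "P *v x"] by simp
  show ?thesis unfolding is_clf_sat_def P_def[symmetric]
  proof (intro conjI allI impI)
    fix x :: "real^'n" assume x0: "x \<noteq> 0"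
    have "P *v x \<noteq> 0" using x0 QPv[of x] by auto
    then show "0 < x \<bullet> (P *v x)" using Vq[of x] Qpos by simp
  next
    fix x :: "real^'n" and i
    assume V1: "x \<bullet> (P *v x) \<le> 1"
    define y where "y = P *v x"
    have xy: "Q *v y = x" by (simp add: y_def QPv)
    have Vy: "y \<bullet> (Q *v y) = x \<bullet> (P *v x)" using Vq[of x] by (simp add: y_def)
    have "0 \<le> mk2 1 (- y) \<bullet> (blk2 1 ((L$i) v* Q) (Q *v (L$i)) Q *v mk2 1 (- y))"
      using Lc[of i] by (simp add: psd_def)
    also have "\<dots> = 1 - 2 * ((L$i) \<bullet> x) + x \<bullet> (P *v x)"
      unfolding blk2_quad dot_lmul_matrix sym_inner[OF sym]
      by (simp add: matrix_vector_mult_diff_distrib xy Vy[symmetric] flip: matrix_vector_mult_scaleR)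
    finally show "(L$i) \<bullet> x \<le> 1" using V1 by linarith
  next
    fix x :: "real^'n" and A B
    assume AB: "(A, B) \<in> \<Omega>" and V1: "x \<bullet> (P *v x) \<le> 1" and x0: "x \<noteq> 0"
    define y where "y = P *v x"
    have xy: "Q *v y = x" by (simp add: y_def QPv)
    have y0: "y \<noteq> 0" using x0 xy by auto
    have Vy: "y \<bullet> (Q *v y) = x \<bullet> (P *v x)" using Vq[of x] by (simp add: y_def)
    define k where "k = Y *v y"
    define h where "h = Z *v y"
    have Kx: "(Y ** P) *v x = k" by (simp add: k_def y_def matrix_vector_mul_assoc)
    have hb: "\<bar>h$i\<bar> \<le> ubar$i" for i
    proof -
      define c where "c = ubar$i"
      have c0: "0 < c" using ub by (simp add: c_def)
      have hi: "h$i = (Z$i) \<bullet> y" by (simp add: h_def matrix_vector_mul_component)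
      have gen: "0 \<le> c^2 - 2 * s * (h$i) + s^2 * (x \<bullet> (P *v x))" for s
      proof -
        have "0 \<le> mk2 1 (- s *\<^sub>R y) \<bullet> (blk2 ((ubar$i)^2) (Z$i) (Z$i) Q *v mk2 1 (- s *\<^sub>R y))"
          using Uc[of i] by (simp add: psd_def)
        also have "\<dots> = c^2 - 2 * s * (h$i) + s^2 * (x \<bullet> (P *v x))"
          unfolding blk2_quad hi c_def Vy[symmetric]
          by (simp add: matrix_vector_mult_scaleR power2_eq_square algebra_simps)
        finally show ?thesis .
      qed
      have g1: "0 \<le> c^2 - 2 * c * (h$i) + c^2 * (x \<bullet> (P *v x))" using gen[of c] by simp
      have g2: "0 \<le> c^2 + 2 * c * (h$i) + c^2 * (x \<bullet> (P *v x))" using gen[of "-c"] by simp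
      have "c^2 * (x \<bullet> (P *v x)) \<le> c^2" using V1 by (simp add: mult_left_le)
      then have a: "c * (h$i) \<le> c * c" and b: "c * (- h$i) \<le> c * c"
        using g1 g2 by (simp_all add: power2_eq_square)
      have "h$i \<le> c" using a mult_le_cancel_left_pos[OF c0, of "h$i" c] by blast
      moreover have "- h$i \<le> c" using b mult_le_cancel_left_pos[OF c0, of "- h$i" c] by blast
      ultimately show ?thesis by (simp add: c_def)
    qed
    define g where "g u = (A *v x + B *v u) \<bullet> (P *v (A *v x + B *v u))" for u
    have conv: "g (t *\<^sub>R u + (1-t) *\<^sub>R v) \<le> t * g u + (1-t) * g v" if t: "0 \<le> t" "t \<le> 1" for u v t
    proof -
      have "A *v x + B *v (t *\<^sub>R u + (1-t) *\<^sub>R v) = t *\<^sub>R (A *v x + B *v u) + (1-t) *\<^sub>R (A *v x + B *v v)"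
        by (simp add: matrix_vector_right_distrib matrix_vector_mult_scaleR algebra_simps)
      then show ?thesis unfolding g_def using q_convex[OF Pnn t] by simp
    qed
    have vert: "g (\<chi> i. if i \<in> J then k$i else h$i) < x \<bullet> (P *v x)" for J
    proof -
      define v where "v = MXi A B J Q Y Z *v y"
      have gv: "g (\<chi> i. if i \<in> J then k$i else h$i) = v \<bullet> (P *v v)"
        unfolding g_def v_def MXi_mv xy k_def h_def ..
      define z where "z = - (P *v v)"
      have "mk3 y 0 z \<noteq> 0"
      proof
        assume "mk3 y 0 z = 0"
        then have "y = p1v 0" by (metis p_mk3(1))
        then show False using y0 by (simp add: p1v_def vec_eq_iff)
      qed
      from pos[OF AB this, of J]
      have "0 < \<tau> * (y \<bullet> (Q *v y)) + 2 * (z \<bullet> v) + z \<bullet> (Q *v z)"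
        by (simp add: Xi_quad_mk3 v_def)
      also have "z \<bullet> v = - (v \<bullet> (P *v v))" by (simp add: z_def inner_commute)
      also have "z \<bullet> (Q *v z) = v \<bullet> (P *v v)"
        by (simp add: z_def matrix_vector_mult_diff_distrib QPv inner_commute
            flip: matrix_vector_mult_scaleR)
      finally have "v \<bullet> (P *v v) < \<tau> * (x \<bullet> (P *v x))" by (simp add: Vy)
      also have "\<dots> \<le> x \<bullet> (P *v x)" using mult_right_mono[OF tau Pnn[of x]] by simp
      finally show ?thesis using gv by simp
    qed
    have box: "\<exists>t. 0 \<le> t \<and> t \<le> 1 \<and> (satU ubar k)$i = t * k$i + (1-t) * h$i" for i
      using sat_box[of "ubar$i" "h$i" "k$i"] ub hb[of i] by (simp add: satU_def)
    have "g (satU ubar k) < x \<bullet> (P *v x)"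
      by (rule box_vertex[of g, OF conv vert box]) auto
    then show "let x' = A *v x + B *v satU ubar ((Y ** P) *v x) in x' \<bullet> (P *v x') < x \<bullet> (P *v x)"
      by (simp add: Kx g_def Let_def)
  qed
qed



lemma sep_compact:
  fixes f :: "nat \<Rightarrow> 'a::metric_space"
  assumes K: "compact K" and f: "\<And>k. f k \<in> K" and d: "0 < \<delta>"
    and sep: "\<And>j k. j < k \<Longrightarrow> \<delta> \<le> dist (f k) (f j)"
  shows False
proof -
  have "seq_compact K" using K by (rule compact_imp_seq_compact)
  then obtain l r where r: "strict_mono (r :: nat \<Rightarrow> nat)" and lim: "(f \<circ> r) \<longlonglongrightarrow> l"
    using f by (metis seq_compactE)
  have "Cauchy (f \<circ> r)" using lim by (rule LIMSEQ_imp_Cauchy)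
  then obtain M where M: "\<forall>m\<ge>M. \<forall>n\<ge>M. dist ((f \<circ> r) m) ((f \<circ> r) n) < \<delta>"
    using metric_CauchyD d by blast
  have "dist (f (r (Suc M))) (f (r M)) < \<delta>" using M by auto
  moreover have "r M < r (Suc M)" using r by (simp add: strict_mono_def)
  ultimately show False using sep by fastforce
qed

lemma sep:
  fixes Q :: "real^'n^'n" and Y Z :: "real^'n^'p" and S :: "((real^'n^'n) \<times> (real^'p^'n)) set"
    and \<epsilon> \<eta> R :: real
  assumes fin: "finite S"
    and feas: "sdp_feasible \<tau> \<epsilon> \<eta> L ubar YY ZZ (verts S) Q Y Z"
    and Rb: "\<forall>M\<in>YY \<union> ZZ. norm M \<le> R"
    and eps: "0 < \<epsilon>" "\<epsilon> \<le> \<eta>" and R0: "0 \<le> R"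
    and q: "(A', B') \<in> S"
    and lam: "lam_min (Xi \<tau> A B J Q Y Z) \<le> 0"
  shows "\<epsilon> / (2 * (CARD('n) * CARD('n) * (CARD('n) * \<eta> + CARD('p) * R))) \<le> dist (A, B) (A', B')"
proof -
  define C where "C = 2 * (CARD('n) * CARD('n) * (CARD('n) * \<eta> + CARD('p) * R))"
  define d where "d = dist (A, B) (A', B')"
  from feas have V: "\<forall>(A, B) \<in> verts S. \<forall>J. psd (Xi \<tau> A B J Q Y Z - \<epsilon> *\<^sub>R mat 1)"
    and etaQ: "psd (\<eta> *\<^sub>R mat 1 - Q)" and YY: "Y \<in> YY" and ZZ: "Z \<in> ZZ"
    by (simp_all add: sdp_feasible_def)
  have hq: "\<epsilon> * (w \<bullet> w) \<le> w \<bullet> (Xi \<tau> A' B' J' Q Y Z *v w)" for w J'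
    by (rule hull_pos[OF fin V q])
  have Qnn: "0 \<le> v \<bullet> (Q *v v)" for v
  proof -
    have "\<epsilon> * (v \<bullet> v) \<le> v \<bullet> (Q *v v)"
      using hq[of "mk3 0 0 v" J] by (simp add: Xi_quad_mk3 inner_mk3)
    moreover have "0 \<le> \<epsilon> * (v \<bullet> v)" using eps by simp
    ultimately show ?thesis by linarith
  qed
  have Qb: "\<bar>Q$k$j\<bar> \<le> \<eta>" for k j
    by (rule Q_entry_bound[OF psd_eta(1)[OF etaQ] Qnn psd_eta(2)[OF etaQ]])
  have Yb: "\<bar>Y$k$j\<bar> \<le> R" for k j
  proof -
    have "\<bar>Y$k$j\<bar> \<le> norm (Y$k)" by (rule component_le_norm_cart)
    also have "\<dots> \<le> norm Y" by (rule Finite_Cartesian_Product.norm_nth_le)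
    also have "\<dots> \<le> R" using Rb YY by auto
    finally show ?thesis .
  qed
  have Zb: "\<bar>Z$k$j\<bar> \<le> R" for k j
  proof -
    have "\<bar>Z$k$j\<bar> \<le> norm (Z$k)" by (rule component_le_norm_cart)
    also have "\<dots> \<le> norm Z" by (rule Finite_Cartesian_Product.norm_nth_le)
    also have "\<dots> \<le> R" using Rb ZZ by auto
    finally show ?thesis .
  qed
  have "\<epsilon> - C * d \<le> lam_min (Xi \<tau> A B J Q Y Z)"
  proof (rule lam_min_ge)
    fix w :: "real^('n+'n+'n)" assume nw: "norm w = 1"
    have ww: "w \<bullet> w = 1" using nw by (simp add: power2_norm_eq_inner[symmetric])
    have "\<bar>w \<bullet> (Xi \<tau> A B J Q Y Z *v w) - w \<bullet> (Xi \<tau> A' B' J Q Y Z *v w)\<bar> \<le> C * d * (w \<bullet> w)"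
      unfolding C_def d_def by (rule Xi_lip[OF Qb Yb Zb])
    moreover have "\<epsilon> * (w \<bullet> w) \<le> w \<bullet> (Xi \<tau> A' B' J Q Y Z *v w)" by (rule hq)
    ultimately show "\<epsilon> - C * d \<le> w \<bullet> (Xi \<tau> A B J Q Y Z *v w)" using ww by simp
  qed
  with lam have "\<epsilon> \<le> C * d" by linarith
  moreover have "0 < C"
  proof -
    have "0 < real CARD('n) * \<eta>" using eps by simp
    moreover have "0 \<le> real CARD('p) * R" using R0 by simp
    ultimately show ?thesis unfolding C_def by simp
  qed
  ultimately show ?thesis unfolding C_def[symmetric] d_def[symmetric]
    by (simp add: pos_divide_le_eq mult.commute)
qed



theorem theorem2:
  fixes \<tau> \<epsilon> \<eta> :: real
    and L :: "real^'n^'l" and ubar :: "real^'p"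
    and \<Omega> :: "((real^'n^'n) \<times> (real^'p^'n)) set"
    and YY ZZ :: "(real^'n^'p) set"
    and p1 :: "(real^'n^'n) \<times> (real^'p^'n)"
    and lrn :: "((real^'n^'n) \<times> (real^'p^'n)) set \<Rightarrow> ((real^'n^'n) \<times> (real^'n^'p) \<times> (real^'n^'p)) option"
    and ver :: "(real^'n^'n) \<times> (real^'n^'p) \<times> (real^'n^'p) \<Rightarrow> ((real^'n^'n) \<times> (real^'p^'n)) \<times> 'p set"
  assumes "0 < \<epsilon>" and "\<epsilon> \<le> \<eta>" and "0 \<le> \<tau>" and "\<tau> \<le> 1"
    and "\<forall>i. 0 < ubar$i"
    and "compact \<Omega>" and "p1 \<in> \<Omega>"
    and "convex YY" and "compact YY" and "YY \<noteq> {}"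
    and "convex ZZ" and "compact ZZ" and "ZZ \<noteq> {}"
    and learner: "\<forall>S. finite S \<and> S \<subseteq> \<Omega> \<longrightarrow>
        (case lrn S of
           None \<Rightarrow> \<not> (\<exists>Q Y Z. sdp_feasible \<tau> \<epsilon> \<eta> L ubar YY ZZ (verts S) Q Y Z)
         | Some (Q, Y, Z) \<Rightarrow> sdp_optimal \<tau> \<epsilon> \<eta> L ubar YY ZZ (verts S) Q Y Z)"
    and verifier: "\<forall>Q Y Z. is_global_min \<Omega> \<tau> Q Y Z (ver (Q, Y, Z))"
  shows "\<exists>k. (\<forall>i<k. \<exists>s. lrn (samples lrn ver p1 i) = Some s \<and> lstar \<tau> ver s \<le> 0) \<and>
             (lrn (samples lrn ver p1 k) = None \<or>
              (\<exists>Q Y Z. lrn (samples lrn ver p1 k) = Some (Q, Y, Z) \<and> 0 < lstar \<tau> ver (Q, Y, Z) \<and>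
                 is_clf_sat \<Omega> L ubar (matrix_inv Q) (Y ** matrix_inv Q)))"
proof -
  define S where "S = samples lrn ver p1"
  have ver_in: "fst (ver s) \<in> \<Omega>" for s
  proof -
    obtain Q Y Z where s: "s = (Q, Y, Z)" by (cases s) auto
    obtain A B J where v: "ver (Q, Y, Z) = ((A, B), J)" by (metis prod.exhaust)
    from verifier have "is_global_min \<Omega> \<tau> Q Y Z (ver (Q, Y, Z))" by blast
    then show ?thesis using v s by (simp add: is_global_min_def)
  qed
  have F1: "finite (S k) \<and> S k \<subseteq> \<Omega> \<and> p1 \<in> S k" for k
  proof (induction k)
    case 0 then show ?case using assms(7) by (simp add: S_def)
  next
    case (Suc k) then show ?case using ver_in by (auto simp: S_def split: option.split)
  qed
  have step: "S k \<subseteq> S (Suc k)" for k by (auto simp: S_def split: option.split)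
  have mono: "S j \<subseteq> S k" if "j \<le> k" for j k
    using lift_Suc_mono_le[of S, OF step that] .
  have "bounded (YY \<union> ZZ)" using assms(9,12) by (simp add: compact_imp_bounded compact_Un)
  then obtain R where Rb: "\<forall>M\<in>YY \<union> ZZ. norm M \<le> R" by (auto simp: bounded_iff)
  have R0: "0 \<le> R"
  proof -
    obtain Y0 where "Y0 \<in> YY" using assms(10) by blast
    then show ?thesis using Rb norm_ge_zero[of Y0] by (meson UnI1 order_trans)
  qed
  define C where "C = 2 * (CARD('n) * CARD('n) * (CARD('n) * \<eta> + CARD('p) * R))"
  have C0: "0 < C"
  proof -
    have "0 < real CARD('n) * \<eta>" using assms(1,2) by simp
    moreover have "0 \<le> real CARD('p) * R" using R0 by simp
    ultimately show ?thesis unfolding C_def by simp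
  qed
  define \<delta> where "\<delta> = \<epsilon> / C"
  have d0: "0 < \<delta>" using C0 assms(1) by (simp add: \<delta>_def)
  have feasS: "sdp_feasible \<tau> \<epsilon> \<eta> L ubar YY ZZ (verts (S k)) Q Y Z" if "lrn (S k) = Some (Q, Y, Z)" for k Q Y Z
  proof -
    have "finite (S k) \<and> S k \<subseteq> \<Omega>" using F1 by blast
    then have "case lrn (S k) of None \<Rightarrow> \<not> (\<exists>Q Y Z. sdp_feasible \<tau> \<epsilon> \<eta> L ubar YY ZZ (verts (S k)) Q Y Z)
         | Some (Q, Y, Z) \<Rightarrow> sdp_optimal \<tau> \<epsilon> \<eta> L ubar YY ZZ (verts (S k)) Q Y Z"
      using learner by blast
    then show ?thesis using that by (simp add: sdp_optimal_def)
  qed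
  have CLF: "is_clf_sat \<Omega> L ubar (matrix_inv Q) (Y ** matrix_inv Q)"
    if l: "lrn (S k) = Some (Q, Y, Z)" and lp: "0 < lstar \<tau> ver (Q, Y, Z)" for k Q Y Z
  proof -
    obtain A0 B0 J0 where v: "ver (Q, Y, Z) = ((A0, B0), J0)" by (metis prod.exhaust)
    from verifier have "is_global_min \<Omega> \<tau> Q Y Z (ver (Q, Y, Z))" by blast
    then have gm: "\<And>A B J. (A, B) \<in> \<Omega> \<Longrightarrow> lam_min (Xi \<tau> A0 B0 J0 Q Y Z) \<le> lam_min (Xi \<tau> A B J Q Y Z)"
      using v by (auto simp: is_global_min_def)
    have l0: "0 < lam_min (Xi \<tau> A0 B0 J0 Q Y Z)" using lp v by (simp add: lstar_def)
    have pos: "0 < w \<bullet> (Xi \<tau> A B J Q Y Z *v w)" if "(A, B) \<in> \<Omega>" "w \<noteq> 0" for A B J w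
    proof -
      have "0 < lam_min (Xi \<tau> A B J Q Y Z)" using gm[of A B J, OF that(1)] l0 by linarith
      moreover have "0 < w \<bullet> w" using that(2) by simp
      ultimately have "0 < lam_min (Xi \<tau> A B J Q Y Z) * (w \<bullet> w)" by simp
      also have "\<dots> \<le> w \<bullet> (Xi \<tau> A B J Q Y Z *v w)" by (rule lam_min_le)
      finally show ?thesis .
    qed
    have ne: "(fst p1, snd p1) \<in> \<Omega>" using assms(7) by simp
    show ?thesis by (rule clf[OF pos ne assms(4) feasS[OF l] assms(5)]) auto
  qed
  define good where "good k \<longleftrightarrow> lrn (S k) = None \<or> (\<exists>s. lrn (S k) = Some s \<and> 0 < lstar \<tau> ver s)" for k
  show ?thesis
  proof (cases "\<exists>k. good k")
    case True
    define k0 where "k0 = (LEAST k. good k)"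
    have g0: "good k0" using True LeastI_ex unfolding k0_def by metis
    have before: "\<not> good i" if "i < k0" for i using not_less_Least that unfolding k0_def by blast
    show ?thesis
    proof (intro exI[of _ k0] conjI allI impI)
      fix i assume "i < k0"
      then have "\<not> good i" by (rule before)
      then show "\<exists>s. lrn (samples lrn ver p1 i) = Some s \<and> lstar \<tau> ver s \<le> 0"
        unfolding good_def S_def by (cases "lrn (samples lrn ver p1 i)") auto
    next
      show "lrn (samples lrn ver p1 k0) = None \<or>
        (\<exists>Q Y Z. lrn (samples lrn ver p1 k0) = Some (Q, Y, Z) \<and> 0 < lstar \<tau> ver (Q, Y, Z) \<and>
           is_clf_sat \<Omega> L ubar (matrix_inv Q) (Y ** matrix_inv Q))"
      proof (cases "lrn (S k0)")
        case None then show ?thesis by (simp add: S_def)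
      next
        case (Some s)
        obtain Q Y Z where s: "s = (Q, Y, Z)" by (cases s) auto
        have lp: "0 < lstar \<tau> ver (Q, Y, Z)" using g0 Some s by (simp add: good_def)
        have "lrn (S k0) = Some (Q, Y, Z)" using Some s by simp
        then show ?thesis using CLF[of k0 Q Y Z] lp unfolding S_def by blast
      qed
    qed
  next
    case False
    have "\<forall>k. \<exists>s. lrn (S k) = Some s \<and> lstar \<tau> ver s \<le> 0"
    proof
      fix k
      from False have "\<not> good k" by blast
      then show "\<exists>s. lrn (S k) = Some s \<and> lstar \<tau> ver s \<le> 0"
        unfolding good_def by (cases "lrn (S k)") auto
    qed
    then obtain sk where sk: "\<And>k. lrn (S k) = Some (sk k)" "\<And>k. lstar \<tau> ver (sk k) \<le> 0" by metis
    define pt where "pt k = fst (ver (sk k))" for k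
    have pt_in: "pt k \<in> \<Omega>" for k using ver_in by (simp add: pt_def)
    have pt_S: "pt j \<in> S (Suc j)" for j using sk(1)[of j] by (simp add: S_def pt_def)
    have sepk: "\<delta> \<le> dist (pt k) (pt j)" if jk: "j < k" for j k
    proof -
      obtain Q Y Z where s: "sk k = (Q, Y, Z)" by (cases "sk k") auto
      obtain A B J where v: "ver (Q, Y, Z) = ((A, B), J)" by (metis prod.exhaust)
      have lam: "lam_min (Xi \<tau> A B J Q Y Z) \<le> 0" using sk(2)[of k] s v by (simp add: lstar_def)
      have "pt j \<in> S k" using pt_S[of j] mono[of "Suc j" k] jk by auto
      moreover obtain A' B' where pj: "pt j = (A', B')" by (cases "pt j") auto
      ultimately have q: "(A', B') \<in> S k" by simp
      have fe: "sdp_feasible \<tau> \<epsilon> \<eta> L ubar YY ZZ (verts (S k)) Q Y Z" using feasS sk(1)[of k] s by simp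
      have "\<delta> \<le> dist (A, B) (A', B')"
        unfolding \<delta>_def C_def
        by (rule sep[OF _ fe Rb assms(1,2) R0 q lam]) (use F1 in blast)
      moreover have "pt k = (A, B)" using s v by (simp add: pt_def)
      ultimately show ?thesis using pj by simp
    qed
    show ?thesis using sep_compact[OF assms(6) pt_in d0 sepk] by blast
  qed
qed

end
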